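(* Under Assumptions (A) and (C), there exists $c_0>0$ such that for every $t\in[0,T]$, $$\langle f,2\Lambda f+(\boldsymbol B_t+(\bar{\boldsymbol B}_t)^* )f\rangle_{L^2,N}\ge c_0\langle f,f\rangle_{L^2,N}\qquad\text{for all }f\in L^2([0,T],\mathbb R^N).$$
   Context: $\langle f,g\rangle_{L^2,N}=\int_0^Tf^\top g\,dt$; kernels $G\in L^2([0,T]^2,\mathbb R^{N\times N})$ induce $(\boldsymbol Gf)(t)=\int_0^TG(t,s)f(s)ds$, $\boldsymbol G^*$ induced by $G(s,t)^\top$; Volterra kernel: $G(t,s)=0$ for $s\ge t$; $\mathcal G$: real Volterra kernels in $L^2([0,T]^2)$. Assumption (A) (relevant part): $\lambda^i>0$ for $i=1,\dots,N$; $B^{ij},\bar B^{ij}\in\mathcal G$ for all $i,j$, with $\bar B^{ii}=B^{ii}$; $B=(B^{ij})_{i,j}$, $\bar B=(\bar B^{ij})_{i,j}$, $\Lambda=\mathrm{diag}(\lambda^1,\dots,\lambda^N)$. Assumption (C): $\exists c_0>0$ with $\langle f,(\boldsymbol B+\bar{\boldsymbol B}^* )f+2\Lambda f-c_0f\rangle_{L^2,N}\ge0$ for all $f$. Truncation: $G_t(s,r)=\mathbb 1_{\{r>t\}}G(s,r)$ with induced operator $\boldsymbol G_t$; $(\bar{\boldsymbol B}_t)^*$ is the adjoint of $\bar{\boldsymbol B}_t$. *)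

theory Defs
  imports "HOL-Analysis.Analysis"
begin

text \<open>Matrix kernels are
G :: 'n => 'n => real => real => real with G i j t s the (i,j) entry of G(t,s).\<close>

definition L2fun :: "real \<Rightarrow> (real \<Rightarrow> real) \<Rightarrow> bool" where
  "L2fun T g \<longleftrightarrow> set_borel_measurable lborel {0..T} g
      \<and> set_integrable lborel {0..T} (\<lambda>t. (g t)\<^sup>2)"

definition L2vec :: "real \<Rightarrow> (real \<Rightarrow> 'n::finite \<Rightarrow> real) \<Rightarrow> bool" where
  "L2vec T f \<longleftrightarrow> (\<forall>i. L2fun T (\<lambda>t. f t i))"

definition L2kernel :: "real \<Rightarrow> (real \<Rightarrow> real \<Rightarrow> real) \<Rightarrow> bool" where
  "L2kernel T G \<longleftrightarrow> set_borel_measurable lborel ({0..T} \<times> {0..T}) (\<lambda>(t, s). G t s)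
      \<and> set_integrable lborel ({0..T} \<times> {0..T}) (\<lambda>(t, s). (G t s)\<^sup>2)"

definition volterra :: "(real \<Rightarrow> real \<Rightarrow> real) \<Rightarrow> bool" where
  "volterra G \<longleftrightarrow> (\<forall>t s. t \<le> s \<longrightarrow> G t s = 0)"

definition volterra_L2 :: "real \<Rightarrow> (real \<Rightarrow> real \<Rightarrow> real) \<Rightarrow> bool" where
  "volterra_L2 T G \<longleftrightarrow> L2kernel T G \<and> volterra G"

definition ipL2 :: "real \<Rightarrow> (real \<Rightarrow> 'n::finite \<Rightarrow> real) \<Rightarrow> (real \<Rightarrow> 'n \<Rightarrow> real) \<Rightarrow> real" where
  "ipL2 T f g = (LINT t:{0..T}|lborel. (\<Sum>i\<in>UNIV. f t i * g t i))"

definition kop :: "real \<Rightarrow> ('n::finite \<Rightarrow> 'n \<Rightarrow> real \<Rightarrow> real \<Rightarrow> real)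
    \<Rightarrow> (real \<Rightarrow> 'n \<Rightarrow> real) \<Rightarrow> (real \<Rightarrow> 'n \<Rightarrow> real)" where
  "kop T G f = (\<lambda>t i. \<Sum>j\<in>UNIV. LINT s:{0..T}|lborel. G i j t s * f s j)"

definition kadj :: "real \<Rightarrow> ('n::finite \<Rightarrow> 'n \<Rightarrow> real \<Rightarrow> real \<Rightarrow> real)
    \<Rightarrow> (real \<Rightarrow> 'n \<Rightarrow> real) \<Rightarrow> (real \<Rightarrow> 'n \<Rightarrow> real)" where
  "kadj T G = kop T (\<lambda>i j t s. G j i s t)"

definition ktrunc :: "real \<Rightarrow> ('n \<Rightarrow> 'n \<Rightarrow> real \<Rightarrow> real \<Rightarrow> real)
    \<Rightarrow> ('n \<Rightarrow> 'n \<Rightarrow> real \<Rightarrow> real \<Rightarrow> real)" where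
  "ktrunc t G = (\<lambda>i j s r. if r > t then G i j s r else 0)"

end

theory Submission
  imports Defs
begin

lemma prod_int:
  fixes a b :: "real \<Rightarrow> real"
  assumes ai: "integrable lborel a" and bi: "integrable lborel b"
  shows "integrable (lborel \<Otimes>\<^sub>M lborel) (\<lambda>x. a (fst x) * b (snd x))"
proof -
  have am[measurable]: "a \<in> borel_measurable lborel" using ai by auto
  have bm[measurable]: "b \<in> borel_measurable lborel" using bi by auto
  have "(\<integral>\<^sup>+x. ennreal (norm (a (fst x) * b (snd x))) \<partial>(lborel \<Otimes>\<^sub>M lborel))
      = (\<integral>\<^sup>+x. \<integral>\<^sup>+y. ennreal (norm (a x)) * ennreal (norm (b y)) \<partial>lborel \<partial>lborel)"
  proof -
    have "(\<integral>\<^sup>+x. \<integral>\<^sup>+y. ennreal (norm (a x)) * ennreal (norm (b y)) \<partial>lborel \<partial>lborel)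
       = (\<integral>\<^sup>+p. ennreal (norm (a (fst p))) * ennreal (norm (b (snd p))) \<partial>(lborel \<Otimes>\<^sub>M lborel))"
      using lborel.nn_integral_fst[of "\<lambda>p. ennreal (norm (a (fst p))) * ennreal (norm (b (snd p)))" lborel]
      by simp
    then show ?thesis by (simp add: abs_mult ennreal_mult)
  qed
  also have "\<dots> = (\<integral>\<^sup>+x. ennreal (norm (a x)) \<partial>lborel) * (\<integral>\<^sup>+y. ennreal (norm (b y)) \<partial>lborel)"
    by (simp add: nn_integral_cmult nn_integral_multc)
  also have "\<dots> < \<infinity>"
    using ai bi unfolding integrable_iff_bounded by (simp add: ennreal_mult_less_top)
  finally show ?thesis unfolding integrable_iff_bounded by auto
qed

lemma KI:
  fixes k :: "real \<times> real \<Rightarrow> real" and u v :: "real \<Rightarrow> real"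
  assumes km[measurable]: "k \<in> borel_measurable (lborel \<Otimes>\<^sub>M lborel)"
    and ki: "integrable (lborel \<Otimes>\<^sub>M lborel) (\<lambda>x. (k x)\<^sup>2)"
    and um[measurable]: "u \<in> borel_measurable lborel" and ui: "integrable lborel (\<lambda>s. (u s)\<^sup>2)"
    and vm[measurable]: "v \<in> borel_measurable lborel" and vi: "integrable lborel (\<lambda>s. (v s)\<^sup>2)"
  shows "integrable lborel (\<lambda>s. LINT r|lborel. u s * k (s,r) * v r)"
proof -
  have "integrable (lborel \<Otimes>\<^sub>M lborel) (\<lambda>x. u (fst x) * k x * v (snd x))"
  proof (rule Bochner_Integration.integrable_bound[where f="\<lambda>x. (k x)\<^sup>2 + (u (fst x))\<^sup>2 * (v (snd x))\<^sup>2"])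
    show "integrable (lborel \<Otimes>\<^sub>M lborel) (\<lambda>x. (k x)\<^sup>2 + (u (fst x))\<^sup>2 * (v (snd x))\<^sup>2)"
      using ki prod_int[OF ui vi] by auto
    show "(\<lambda>x. u (fst x) * k x * v (snd x)) \<in> borel_measurable (lborel \<Otimes>\<^sub>M lborel)" by measurable
    show "AE x in lborel \<Otimes>\<^sub>M lborel. norm (u (fst x) * k x * v (snd x)) \<le> norm ((k x)\<^sup>2 + (u (fst x))\<^sup>2 * (v (snd x))\<^sup>2)"
    proof (rule AE_I2)
      fix x
      have "2 * \<bar>k x\<bar> * \<bar>u (fst x) * v (snd x)\<bar> \<le> (k x)\<^sup>2 + (u (fst x) * v (snd x))\<^sup>2"
        using sum_squares_bound[of "\<bar>k x\<bar>" "\<bar>u (fst x) * v (snd x)\<bar>"] by (simp add: power2_abs)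
      moreover have "0 \<le> \<bar>k x\<bar> * \<bar>u (fst x) * v (snd x)\<bar>" by simp
      moreover have "norm (u (fst x) * k x * v (snd x)) = \<bar>k x\<bar> * \<bar>u (fst x) * v (snd x)\<bar>"
        by (simp add: abs_mult)
      moreover have "norm ((k x)\<^sup>2 + (u (fst x))\<^sup>2 * (v (snd x))\<^sup>2) = (k x)\<^sup>2 + (u (fst x) * v (snd x))\<^sup>2"
        by (simp add: power_mult_distrib)
      ultimately show "norm (u (fst x) * k x * v (snd x)) \<le> norm ((k x)\<^sup>2 + (u (fst x))\<^sup>2 * (v (snd x))\<^sup>2)"
        by linarith
    qed
  qed
  from lborel_pair.integrable_fst'[OF this] show ?thesis by simp
qed

lemma kern:
  fixes K :: "real \<Rightarrow> real \<Rightarrow> real"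
  assumes "L2kernel T K"
  shows "(\<lambda>x. indicator ({0..T}\<times>{0..T}) x * K (fst x) (snd x)) \<in> borel_measurable (lborel \<Otimes>\<^sub>M lborel)"
    and "integrable (lborel \<Otimes>\<^sub>M lborel) (\<lambda>x. (indicator ({0..T}\<times>{0..T}) x * K (fst x) (snd x))\<^sup>2)"
    and "(\<lambda>x. indicator ({0..T}\<times>{0..T}) x * K (snd x) (fst x)) \<in> borel_measurable (lborel \<Otimes>\<^sub>M lborel)"
    and "integrable (lborel \<Otimes>\<^sub>M lborel) (\<lambda>x. (indicator ({0..T}\<times>{0..T}) x * K (snd x) (fst x))\<^sup>2)"
proof -
  let ?S = "{0..T}\<times>{0..T}"
  have e1: "(\<lambda>x. indicator ?S x *\<^sub>R (case x of (t, s) \<Rightarrow> K t s)) = (\<lambda>x. indicator ?S x * K (fst x) (snd x))"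
    by (auto simp: fun_eq_iff split: prod.splits)
  have e2: "(\<lambda>x. indicator ?S x *\<^sub>R (case x of (t, s) \<Rightarrow> (K t s)\<^sup>2)) = (\<lambda>x. (indicator ?S x * K (fst x) (snd x))\<^sup>2)"
    by (auto simp: fun_eq_iff indicator_def power2_eq_square split: prod.splits)
  from assms have m: "(\<lambda>x. indicator ?S x * K (fst x) (snd x)) \<in> borel_measurable lborel"
    and i: "integrable lborel (\<lambda>x. (indicator ?S x * K (fst x) (snd x))\<^sup>2)"
    unfolding L2kernel_def set_borel_measurable_def set_integrable_def e1 e2 by auto
  from m show m': "(\<lambda>x. indicator ?S x * K (fst x) (snd x)) \<in> borel_measurable (lborel \<Otimes>\<^sub>M lborel)"
    by (simp add: lborel_prod)
  from i show i': "integrable (lborel \<Otimes>\<^sub>M lborel) (\<lambda>x. (indicator ?S x * K (fst x) (snd x))\<^sup>2)"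
    by (simp add: lborel_prod)
  have sw: "\<And>x. indicator ?S (snd x, fst x) = (indicator ?S x :: real)"
    by (auto simp: indicator_def)
  have "(\<lambda>x. indicator ?S x * K (snd x) (fst x)) = (\<lambda>x. indicator ?S x * K (fst x) (snd x)) \<circ> (\<lambda>(x,y). (y,x))"
    by (auto simp: fun_eq_iff sw indicator_def)
  then show "(\<lambda>x. indicator ?S x * K (snd x) (fst x)) \<in> borel_measurable (lborel \<Otimes>\<^sub>M lborel)"
    using measurable_comp[OF measurable_pair_swap' m'] by simp
  have "integrable (lborel \<Otimes>\<^sub>M lborel) (\<lambda>(x,y). (indicator ?S (y,x) * K y x)\<^sup>2)"
    using lborel_pair.integrable_product_swap[OF i'] by (simp add: split_beta')
  then show "integrable (lborel \<Otimes>\<^sub>M lborel) (\<lambda>x. (indicator ?S x * K (snd x) (fst x))\<^sup>2)"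
    by (simp add: split_beta' sw)
qed

lemma L2ind:
  assumes "L2fun T g"
  shows "(\<lambda>s. indicator {0..T} s * g s) \<in> borel_measurable lborel"
    and "integrable lborel (\<lambda>s. (indicator {0..T} s * g s)\<^sup>2)"
proof -
  have e: "(\<lambda>s. indicator {0..T} s *\<^sub>R (g s)\<^sup>2) = (\<lambda>s. (indicator {0..T} s * g s)\<^sup>2)"
    by (auto simp: fun_eq_iff indicator_def)
  from assms show "(\<lambda>s. indicator {0..T} s * g s) \<in> borel_measurable lborel"
    "integrable lborel (\<lambda>s. (indicator {0..T} s * g s)\<^sup>2)"
    unfolding L2fun_def set_borel_measurable_def set_integrable_def e by auto
qed

lemma trunc_L2:
  assumes "L2fun T g"
  shows "L2fun T (\<lambda>s. if t < s then g s else 0)"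
proof -
  have m: "(\<lambda>s. indicator {0..T} s * g s) \<in> borel_measurable lborel"
    and i: "integrable lborel (\<lambda>s. indicator {0..T} s * (g s)\<^sup>2)"
    using assms unfolding L2fun_def set_borel_measurable_def set_integrable_def by auto
  have e1: "(\<lambda>s. indicator {0..T} s *\<^sub>R (if t < s then g s else 0)) = (\<lambda>s. indicator {t<..} s * (indicator {0..T} s * g s))"
    by (auto simp: fun_eq_iff indicator_def)
  have "(\<lambda>s. indicator {0..T} s *\<^sub>R (if t < s then g s else 0)) \<in> borel_measurable lborel"
    unfolding e1 using m by measurable
  moreover have "integrable lborel (\<lambda>s. indicator {0..T} s *\<^sub>R (if t < s then g s else 0)\<^sup>2)"
  proof (rule Bochner_Integration.integrable_bound[OF i])
    have e2: "(\<lambda>s. indicator {0..T} s *\<^sub>R (if t < s then g s else 0)\<^sup>2) = (\<lambda>s. indicator {t<..} s * (indicator {0..T} s * g s)\<^sup>2)"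
      by (auto simp: fun_eq_iff indicator_def)
    show "(\<lambda>s. indicator {0..T} s *\<^sub>R (if t < s then g s else 0)\<^sup>2) \<in> borel_measurable lborel"
      unfolding e2 using m by measurable
    show "AE x in lborel. norm (indicator {0..T} x *\<^sub>R (if t < x then g x else 0)\<^sup>2) \<le> norm (indicator {0..T} x * (g x)\<^sup>2)"
      by (auto simp: indicator_def)
  qed
  ultimately show ?thesis unfolding L2fun_def set_borel_measurable_def set_integrable_def by auto
qed

lemma termK:
  fixes K :: "real \<Rightarrow> real \<Rightarrow> real"
  assumes K: "L2kernel T K" and a: "L2fun T a" and b: "L2fun T b"
  shows "integrable lborel (\<lambda>s. indicator {0..T} s * (a s * (LINT r:{0..T}|lborel. K s r * b r)))"
    and "integrable lborel (\<lambda>s. indicator {0..T} s * (a s * (LINT r:{0..T}|lborel. K r s * b r)))"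
proof -
  let ?S = "{0..T}\<times>{0..T}"
  note kk = kern[OF K]
  note aa = L2ind[OF a] and bb = L2ind[OF b]
  have eq1: "(LINT r|lborel. (indicator {0..T} s * a s) * (indicator ?S (s,r) * K (fst (s,r)) (snd (s,r))) * (indicator {0..T} r * b r))
     = indicator {0..T} s * (a s * (LINT r:{0..T}|lborel. K s r * b r))" for s
  proof -
    have "(\<lambda>r. (indicator {0..T} s * a s) * (indicator ?S (s,r) * K (fst (s,r)) (snd (s,r))) * (indicator {0..T} r * b r))
       = (\<lambda>r. (indicator {0..T} s * a s) * (indicator {0..T} r *\<^sub>R (K s r * b r)))"
      by (auto simp: indicator_def fun_eq_iff)
    then show ?thesis unfolding set_lebesgue_integral_def by simp
  qed
  have eq2: "(LINT r|lborel. (indicator {0..T} s * a s) * (indicator ?S (s,r) * K (snd (s,r)) (fst (s,r))) * (indicator {0..T} r * b r))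
     = indicator {0..T} s * (a s * (LINT r:{0..T}|lborel. K r s * b r))" for s
  proof -
    have "(\<lambda>r. (indicator {0..T} s * a s) * (indicator ?S (s,r) * K (snd (s,r)) (fst (s,r))) * (indicator {0..T} r * b r))
       = (\<lambda>r. (indicator {0..T} s * a s) * (indicator {0..T} r *\<^sub>R (K r s * b r)))"
      by (auto simp: indicator_def fun_eq_iff)
    then show ?thesis unfolding set_lebesgue_integral_def by simp
  qed
  show "integrable lborel (\<lambda>s. indicator {0..T} s * (a s * (LINT r:{0..T}|lborel. K s r * b r)))"
    using KI[OF kk(1) kk(2) aa bb] unfolding eq1 .
  show "integrable lborel (\<lambda>s. indicator {0..T} s * (a s * (LINT r:{0..T}|lborel. K r s * b r)))"
    using KI[OF kk(3) kk(4) aa bb] unfolding eq2 .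
qed

lemma sq_int:
  assumes "L2fun T a"
  shows "integrable lborel (\<lambda>s. indicator {0..T} s * (a s * a s))"
  using assms unfolding L2fun_def set_integrable_def by (simp add: power2_eq_square)

lemma kadj_eq: "kadj T G f s i = (\<Sum>j\<in>UNIV. LINT r:{0..T}|lborel. G j i r s * f r j)"
  by (simp add: kadj_def kop_def)

theorem mainTheorem13:
  fixes T :: real
    and lam :: "'n::finite \<Rightarrow> real"
    and B Bbar :: "'n \<Rightarrow> 'n \<Rightarrow> real \<Rightarrow> real \<Rightarrow> real"
  assumes T_pos: "0 < T"
    and A_lam: "\<forall>i. lam i > 0"
    and A_B: "\<forall>i j. volterra_L2 T (B i j)"
    and A_Bbar: "\<forall>i j. volterra_L2 T (Bbar i j)"
    and A_diag: "\<forall>i. Bbar i i = B i i"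
    and C: "\<exists>c0>0. \<forall>f. L2vec T f \<longrightarrow>
              ipL2 T f (\<lambda>s i. kop T B f s i + kadj T Bbar f s i + 2 * lam i * f s i - c0 * f s i) \<ge> 0"
  shows "\<exists>c0>0. \<forall>t\<in>{0..T}. \<forall>f. L2vec T f \<longrightarrow>
           ipL2 T f (\<lambda>s i. 2 * lam i * f s i + kop T (ktrunc t B) f s i
                          + kadj T (ktrunc t Bbar) f s i) \<ge> c0 * ipL2 T f f"
proof -
  obtain c0 where c0: "c0 > 0" and Cc: "\<And>f. L2vec T f \<Longrightarrow>
      ipL2 T f (\<lambda>s i. kop T B f s i + kadj T Bbar f s i + 2 * lam i * f s i - c0 * f s i) \<ge> 0"
    using C by blast
  define m where "m = Min (range lam)"
  have mpos: "m > 0" unfolding m_def using A_lam by (simp add: Min_gr_iff)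
  have mle: "m \<le> lam i" for i unfolding m_def by simp
  define c1 where "c1 = min c0 (2 * m)"
  have c1pos: "c1 > 0" unfolding c1_def using c0 mpos by simp
  have BK: "L2kernel T (B i j)" "volterra (B i j)" for i j using A_B unfolding volterra_L2_def by auto
  have BbK: "L2kernel T (Bbar i j)" "volterra (Bbar i j)" for i j using A_Bbar unfolding volterra_L2_def by auto
  have "\<forall>t\<in>{0..T}. \<forall>f. L2vec T f \<longrightarrow>
           ipL2 T f (\<lambda>s i. 2 * lam i * f s i + kop T (ktrunc t B) f s i
                          + kadj T (ktrunc t Bbar) f s i) \<ge> c1 * ipL2 T f f"
  proof (intro ballI allI impI)
    fix t f
    assume tS: "t \<in> {0..T}" and fL2: "L2vec T (f :: real \<Rightarrow> 'n \<Rightarrow> real)"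
    let ?S = "{0..T}"
    define g where "g = (\<lambda>s i. if t < s then f s i else (0::real))"
    have fL: "L2fun T (\<lambda>s. f s i)" for i using fL2 unfolding L2vec_def by auto
    have gL: "L2fun T (\<lambda>s. g s i)" for i unfolding g_def by (rule trunc_L2[OF fL])
    have gL2: "L2vec T g" using gL unfolding L2vec_def by auto
    define Q where "Q s = (\<Sum>i\<in>UNIV. g s i * (kop T B g s i + kadj T Bbar g s i + 2 * lam i * g s i - c0 * g s i))" for s
    define P where "P s = (\<Sum>i\<in>UNIV. f s i * (2 * lam i * f s i + kop T (ktrunc t B) f s i + kadj T (ktrunc t Bbar) f s i))" for s
    define H where "H s = c0 * (\<Sum>i\<in>UNIV. g s i * g s i) + (if s \<le> t then (\<Sum>i\<in>UNIV. 2 * lam i * (f s i * f s i)) else 0)" for s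
    have kopT: "kop T (ktrunc t B) f = kop T B g"
    proof -
      have "(\<lambda>r. ktrunc t B i j s r * f r j) = (\<lambda>r. B i j s r * g r j)" for i j s
        by (auto simp: ktrunc_def g_def fun_eq_iff)
      then show ?thesis by (simp add: kop_def)
    qed
    have kopz: "kop T B g s i = 0" if "s \<le> t" for s i
    proof -
      have "(\<lambda>r. B i j s r * g r j) = (\<lambda>r. 0)" for j
        using BK(2) that by (auto simp: g_def fun_eq_iff volterra_def)
      then show ?thesis by (simp add: kop_def)
    qed
    have kadjz: "kadj T (ktrunc t Bbar) f s i = 0" if "s \<le> t" for s i
    proof -
      have "(\<lambda>r. ktrunc t Bbar j i r s * f r j) = (\<lambda>r. 0)" for j
        using that by (auto simp: ktrunc_def fun_eq_iff)
      then show ?thesis by (simp add: kadj_eq)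
    qed
    have kadjT: "kadj T (ktrunc t Bbar) f s i = kadj T Bbar g s i" if "t < s" for s i
    proof -
      have "(\<lambda>r. ktrunc t Bbar j i r s * f r j) = (\<lambda>r. Bbar j i r s * g r j)" for j
        using that BbK(2)[of j i] by (auto simp: ktrunc_def g_def fun_eq_iff volterra_def)
      then show ?thesis by (simp add: kadj_eq)
    qed
    have PQH: "P s = Q s + H s" for s
    proof (cases "t < s")
      case True
      then have gf: "g s i = f s i" for i by (simp add: g_def)
      have "Q s + H s = (\<Sum>i\<in>UNIV. f s i * (kop T B g s i + kadj T Bbar g s i + 2 * lam i * f s i - c0 * f s i) + c0 * (f s i * f s i))"
        using True by (simp add: Q_def H_def gf sum.distrib sum_distrib_left)
      also have "\<dots> = P s"
        unfolding P_def kopT using kadjT[OF True] by (intro sum.cong) (auto simp: algebra_simps)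
      finally show ?thesis by simp
    next
      case False
      then have g0: "g s i = 0" for i by (simp add: g_def)
      show ?thesis using False
        by (simp add: P_def Q_def H_def g0 kadjz kopT kopz algebra_simps sum_distrib_left)
    qed
    have IQ: "integrable lborel (\<lambda>s. indicator ?S s * Q s)"
    proof -
      have e: "(\<lambda>s. indicator ?S s * Q s) = (\<lambda>s. \<Sum>i\<in>UNIV.
          (\<Sum>j\<in>UNIV. indicator ?S s * (g s i * (LINT r:?S|lborel. B i j s r * g r j)))
        + (\<Sum>j\<in>UNIV. indicator ?S s * (g s i * (LINT r:?S|lborel. Bbar j i r s * g r j)))
        + (2 * lam i - c0) * (indicator ?S s * (g s i * g s i)))"
        by (simp add: fun_eq_iff Q_def kop_def kadj_eq sum_distrib_left sum.distrib algebra_simps)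
      have t1: "integrable lborel (\<lambda>s. indicator ?S s * (g s i * (LINT r:?S|lborel. B i j s r * g r j)))" for i j
        by (rule termK(1)[OF BK(1) gL gL])
      have t2: "integrable lborel (\<lambda>s. indicator ?S s * (g s i * (LINT r:?S|lborel. Bbar j i r s * g r j)))" for i j
        by (rule termK(2)[OF BbK(1) gL gL])
      show ?thesis unfolding e
      proof (rule Bochner_Integration.integrable_sum)
        fix i :: 'n
        show "integrable lborel (\<lambda>s. (\<Sum>j\<in>UNIV. indicator ?S s * (g s i * (LINT r:?S|lborel. B i j s r * g r j)))
        + (\<Sum>j\<in>UNIV. indicator ?S s * (g s i * (LINT r:?S|lborel. Bbar j i r s * g r j)))
        + (2 * lam i - c0) * (indicator ?S s * (g s i * g s i)))"
          apply (rule Bochner_Integration.integrable_add)+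
          apply (rule Bochner_Integration.integrable_sum, rule t1)
          apply (rule Bochner_Integration.integrable_sum, rule t2)
          apply (rule Bochner_Integration.integrable_mult_right, rule sq_int[OF gL])
          done
      qed
    qed
    have IH: "integrable lborel (\<lambda>s. indicator ?S s * H s)"
    proof -
      have e: "(\<lambda>s. indicator ?S s * H s) = (\<lambda>s. c0 * (\<Sum>i\<in>UNIV. indicator ?S s * (g s i * g s i))
          + (\<Sum>i\<in>UNIV. 2 * lam i * (indicator {..t} s *\<^sub>R (indicator ?S s * (f s i * f s i)))))"
        by (auto simp: fun_eq_iff H_def sum_distrib_left indicator_def algebra_simps)
      show ?thesis unfolding e
        using sq_int[OF gL] sq_int[OF fL]
        by (intro Bochner_Integration.integrable_sum Bochner_Integration.integrable_add Bochner_Integration.integrable_mult_right integrable_mult_indicator) auto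
    qed
    have IF: "integrable lborel (\<lambda>s. indicator ?S s * (\<Sum>i\<in>UNIV. f s i * f s i))"
      unfolding sum_distrib_left by (rule Bochner_Integration.integrable_sum, rule sq_int[OF fL])
    have "ipL2 T f (\<lambda>s i. 2 * lam i * f s i + kop T (ktrunc t B) f s i + kadj T (ktrunc t Bbar) f s i)
        = integral\<^sup>L lborel (\<lambda>s. indicator ?S s * P s)"
      by (simp add: ipL2_def set_lebesgue_integral_def P_def)
    also have "\<dots> = integral\<^sup>L lborel (\<lambda>s. indicator ?S s * Q s) + integral\<^sup>L lborel (\<lambda>s. indicator ?S s * H s)"
      unfolding PQH distrib_left by (rule Bochner_Integration.integral_add[OF IQ IH])
    finally have E1: "ipL2 T f (\<lambda>s i. 2 * lam i * f s i + kop T (ktrunc t B) f s i + kadj T (ktrunc t Bbar) f s i)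
        = integral\<^sup>L lborel (\<lambda>s. indicator ?S s * Q s) + integral\<^sup>L lborel (\<lambda>s. indicator ?S s * H s)" .
    have E2: "integral\<^sup>L lborel (\<lambda>s. indicator ?S s * Q s) \<ge> 0"
      using Cc[OF gL2] by (simp add: ipL2_def set_lebesgue_integral_def Q_def)
    have E3: "integral\<^sup>L lborel (\<lambda>s. indicator ?S s * H s) \<ge> integral\<^sup>L lborel (\<lambda>s. c1 * (indicator ?S s * (\<Sum>i\<in>UNIV. f s i * f s i)))"
    proof (rule integral_mono[OF _ IH])
      show "integrable lborel (\<lambda>s. c1 * (indicator ?S s * (\<Sum>i\<in>UNIV. f s i * f s i)))"
        using IF by auto
      fix s
      have "c1 * (\<Sum>i\<in>UNIV. f s i * f s i) \<le> H s"
      proof (cases "t < s")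
        case True
        then have "H s = c0 * (\<Sum>i\<in>UNIV. f s i * f s i)" by (simp add: H_def g_def)
        moreover have "c1 \<le> c0" unfolding c1_def by simp
        moreover have "0 \<le> (\<Sum>i\<in>UNIV. f s i * f s i)" by (intro sum_nonneg) simp
        ultimately show ?thesis by (simp add: mult_right_mono)
      next
        case False
        then have "H s = (\<Sum>i\<in>UNIV. 2 * lam i * (f s i * f s i))" by (simp add: H_def g_def)
        moreover have "c1 * (f s i * f s i) \<le> 2 * lam i * (f s i * f s i)" for i
        proof (rule mult_right_mono)
          show "c1 \<le> 2 * lam i" unfolding c1_def using mle[of i] by simp
        qed simp
        ultimately show ?thesis by (simp add: sum_distrib_left sum_mono)
      qed
      then show "c1 * (indicator ?S s * (\<Sum>i\<in>UNIV. f s i * f s i)) \<le> indicator ?S s * H s"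
        by (auto simp: indicator_def)
    qed
    have E4: "integral\<^sup>L lborel (\<lambda>s. c1 * (indicator ?S s * (\<Sum>i\<in>UNIV. f s i * f s i))) = c1 * ipL2 T f f"
      by (simp add: ipL2_def set_lebesgue_integral_def)
    show "c1 * ipL2 T f f \<le> ipL2 T f (\<lambda>s i. 2 * lam i * f s i + kop T (ktrunc t B) f s i + kadj T (ktrunc t Bbar) f s i)"
      using E1 E2 E3 E4 by linarith
  qed
  then show ?thesis using c1pos by blast
qed

end
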